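(* Let $n\in\mathbb{N}$ and $a_1,\dots,a_n\in\mathbb{N}$ with $\prod_{j=1}^na_j-(-1)^n>0$ and, if $n$ is even, neither $a_j=1$ for all even $j$ nor $a_j=1$ for all odd $j$. Then there is a unique tuple $(w_1,\dots,w_n)$ of rational numbers with $a_jw_j+w_{j-1}=1$ for all $j\in\{1,\dots,n\}$, where $w_0:=w_n$; it satisfies $w_j\in\mathbb{Q}\cap(0,1)$ and is given by $w_j=\frac{v_j}{d}$ with $$v_j=\rho(a_{j-1},a_{j-2},\dots,a_2,a_1,a_n,a_{n-1},\dots,a_{j+1}),\qquad d=\prod_{j=1}^na_j-(-1)^n.$$ Let $\gamma=\gcd(v_1,d)$. Then writing $w_j=\frac{s_j}{t_j}$ with $s_j,t_j\in\mathbb{N}$ coprime, one has $s_j=\frac{v_j}{\gamma}$ and $t_1=\dots=t_n=\frac{d}{\gamma}$; in particular $\gamma=\gcd(v_j,d)$ for every $j$. Moreover $\prod_{j=1}^n\left(\frac1{w_j}-1\right)=\prod_{j=1}^na_j$ (this is the Milnor number $\mu$), and $$D_{\mathbf w}=\gamma\cdot\Lambda_{d/\gamma}+(-1)^n\Lambda_1 .$$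
   Context: The function $\rho:\bigcup_{k\ge0}\mathbb{Z}^k\to\mathbb{Z}$ is $\rho(x_1,\dots,x_k)=x_1\cdots x_k-x_2\cdots x_k+\dots+(-1)^{k-1}x_k+(-1)^k$, with $\rho(\emptyset)=1$. $S^{UR}$ is the set of roots of unity and $\mathbb{Q}\langle S^{UR}\rangle$ its group ring over $\mathbb{Q}$ (elements $\sum b_j\langle\zeta_j\rangle$, product $\langle\zeta_1\rangle\langle\zeta_2\rangle=\langle\zeta_1\zeta_2\rangle$). $\Lambda_m=\sum_{a=0}^{m-1}\langle e^{2\pi i a/m}\rangle$. For weights $w_j=s_j/t_j\in\mathbb{Q}\cap(0,1)$ with $\gcd(s_j,t_j)=1$, $D_{\mathbf w}=\prod_{j=1}^n\left(\frac1{s_j}\Lambda_{t_j}-\Lambda_1\right)$. *)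

theory Defs
  imports Complex_Main
begin

definition rho :: "int list \<Rightarrow> int" where
  "rho xs = (\<Sum>i<length xs. (-1)^i * prod_list (drop i xs)) + (-1) ^ length xs"

text \<open>Index a_(j-k) read cyclically in {1..n} (for 1 <= j <= n, 1 <= k <= n-1).\<close>
definition vlist :: "nat \<Rightarrow> (nat \<Rightarrow> nat) \<Rightarrow> nat \<Rightarrow> int list" where
  "vlist n a j = map (\<lambda>k. int (a ((j + n - k - 1) mod n + 1))) [1..<n]"

text \<open>Group ring Q<S^UR>: finitely supported functions from complex numbers
  (supported on roots of unity) to rationals, with convolution product.\<close>
type_synonym qgr = "complex \<Rightarrow> rat"

definition gr_basis :: "complex \<Rightarrow> qgr" where
  "gr_basis \<zeta> = (\<lambda>z. if z = \<zeta> then 1 else 0)"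

definition gr_add :: "qgr \<Rightarrow> qgr \<Rightarrow> qgr" where
  "gr_add f g = (\<lambda>z. f z + g z)"

definition gr_diff :: "qgr \<Rightarrow> qgr \<Rightarrow> qgr" where
  "gr_diff f g = (\<lambda>z. f z - g z)"

definition gr_smult :: "rat \<Rightarrow> qgr \<Rightarrow> qgr" where
  "gr_smult c f = (\<lambda>z. c * f z)"

definition gr_mult :: "qgr \<Rightarrow> qgr \<Rightarrow> qgr" where
  "gr_mult f g = (\<lambda>z. \<Sum>p\<in>{(x, y). f x \<noteq> 0 \<and> g y \<noteq> 0 \<and> x * y = z}. f (fst p) * g (snd p))"

definition gr_one :: qgr where "gr_one = gr_basis 1"

fun gr_prod :: "(nat \<Rightarrow> qgr) \<Rightarrow> nat \<Rightarrow> qgr" where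
  "gr_prod F 0 = gr_one"
| "gr_prod F (Suc k) = gr_mult (gr_prod F k) (F (Suc k))"

definition Lambda :: "nat \<Rightarrow> qgr" where
  "Lambda m = (\<lambda>z. \<Sum>a<m. gr_basis (exp (2 * of_real pi * \<i> * of_nat a / of_nat m)) z)"

definition Dw :: "nat \<Rightarrow> (nat \<Rightarrow> rat) \<Rightarrow> qgr" where
  "Dw n w = gr_prod (\<lambda>j. case quotient_of (w j) of (s, t) \<Rightarrow>
      gr_diff (gr_smult (1 / of_int s) (Lambda (nat t))) (Lambda 1)) n"

end

theory Submission
  imports Defs
begin


lemma rho_Nil[simp]: "rho [] = 1" by (simp add: rho_def)

lemma rho_Cons: "rho (x # xs) = prod_list (x # xs) - rho xs"
proof -
  have "rho (x # xs) = (\<Sum>i<Suc (length xs). (-1)^i * prod_list (drop i (x # xs))) + (-1) ^ Suc (length xs)"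
    by (simp add: rho_def)
  also have "\<dots> = prod_list (x # xs) + (\<Sum>i<length xs. (-1)^Suc i * prod_list (drop i xs)) + (-1) ^ Suc (length xs)"
    by (subst sum.lessThan_Suc_shift) simp
  also have "\<dots> = prod_list (x # xs) - rho xs"
    by (simp add: rho_def sum_negf)
  finally show ?thesis .
qed

lemma rho_snoc: "rho (xs @ [y]) = y * rho xs - (-1) ^ length xs"
  by (induction xs) (auto simp: rho_Cons algebra_simps)

lemma rho_CC: "rho (x # y # zs) = (x - 1) * y * prod_list zs + rho zs"
  by (simp add: rho_Cons algebra_simps)

lemma prod_list_ge1: "\<forall>x\<in>set xs. x \<ge> (1::int) \<Longrightarrow> prod_list xs \<ge> 1"
  by (induction xs) (auto intro: order_trans[OF _ mult_mono, of _ "1*1"])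

lemma rho_nonneg:
  "\<forall>x\<in>set xs. x \<ge> (1::int) \<Longrightarrow> rho xs \<ge> 0 \<and> (rho xs = 0 \<longrightarrow> (\<forall>i<length xs. even i \<longrightarrow> xs ! i = 1))"
proof (induction xs rule: induct_list012)
  case 1 then show ?case by simp
next
  case (2 x) then show ?case by (simp add: rho_Cons)
next
  case (3 x y zs)
  have p: "prod_list zs \<ge> 1" using 3(3) prod_list_ge1 by auto
  have x: "x \<ge> 1" "y \<ge> 1" using 3(3) by auto
  have IH: "rho zs \<ge> 0 \<and> (rho zs = 0 \<longrightarrow> (\<forall>i<length zs. even i \<longrightarrow> zs ! i = 1))" using 3 by auto
  have t: "(x - 1) * y * prod_list zs \<ge> 0" using p x by simp
  show ?case
  proof
    show "rho (x # y # zs) \<ge> 0" using t IH by (simp add: rho_CC)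
    show "rho (x # y # zs) = 0 \<longrightarrow> (\<forall>i<length (x # y # zs). even i \<longrightarrow> (x # y # zs) ! i = 1)"
    proof (intro impI allI)
      fix i assume z: "rho (x # y # zs) = 0" and i: "i < length (x # y # zs)" "even i"
      have s: "(x - 1) * y * prod_list zs + rho zs = 0" using z by (simp add: rho_CC)
      have a: "(x - 1) * y * prod_list zs = 0" "rho zs = 0" using s t IH by linarith+
      have "x = 1" using a(1) p x by auto
      show "(x # y # zs) ! i = 1"
      proof (cases i)
        case 0 then show ?thesis using \<open>x = 1\<close> by simp
      next
        case (Suc i') then obtain i'' where "i' = Suc i''" using i by (cases i') auto
        then show ?thesis using Suc i IH a by auto
      qed
    qed
  qed
qed

lemma rho_pos_even:
  "\<forall>x\<in>set xs. x \<ge> (1::int) \<Longrightarrow> even (length xs) \<Longrightarrow> rho xs \<ge> 1"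
proof (induction xs rule: induct_list012)
  case (3 x y zs)
  have p: "prod_list zs \<ge> 1" using 3(3) prod_list_ge1 by auto
  have x: "x \<ge> 1" "y \<ge> 1" using 3(3) by auto
  have t: "(x - 1) * y * prod_list zs \<ge> 0" using p x by simp
  then show ?case using 3 by (simp add: rho_CC)
qed auto



definition idx :: "nat \<Rightarrow> nat \<Rightarrow> nat \<Rightarrow> nat" where
  "idx n j k = (j + n - k - 1) mod n + 1"

lemma idx_eq: "1 \<le> (k::nat) \<Longrightarrow> k < n \<Longrightarrow> 1 \<le> j \<Longrightarrow> j \<le> n \<Longrightarrow>
   idx n j k = (if k < j then j - k else j + n - k)"
  unfolding idx_def
proof (cases "k < j")
  case True
  assume "1 \<le> k" "k < n" "1 \<le> j" "j \<le> n"
  then have eq: "j + n - k - 1 = (j - k - 1) + n" using True by arith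
  have "(j + n - k - 1) mod n = j - k - 1"
    unfolding eq mod_add_self2 using \<open>j \<le> n\<close> True by simp
  then show "(j + n - k - 1) mod n + 1 = (if k < j then j - k else j + n - k)" using True by simp
qed simp

lemma vlist_idx: "vlist n a j = map (\<lambda>k. int (a (idx n j k))) [1..<n]"
  by (simp add: vlist_def idx_def)

lemma idx_bij:
  assumes j: "1 \<le> j" "j \<le> n"
  shows "(\<Prod>k\<in>{1..<n}. f (idx n j k)) = (\<Prod>i\<in>{1..n} - {j}. (f i :: 'a::comm_monoid_mult))"
proof (rule prod.reindex_bij_witness[where i="\<lambda>i. if i < j then j - i else j + n - i"
          and j="\<lambda>k. idx n j k"])
  fix k assume k: "k \<in> {1..<n}"
  then show "(if idx n j k < j then j - idx n j k else j + n - idx n j k) = k"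
    using j by (auto simp: idx_eq)
  show "idx n j k \<in> {1..n} - {j}" using k j by (auto simp: idx_eq)
next
  fix i assume i: "i \<in> {1..n} - {j}"
  show "(if i < j then j - i else j + n - i) \<in> {1..<n}" using i j by auto
  then show "idx n j (if i < j then j - i else j + n - i) = i"
    using i j by (auto simp: idx_eq)
qed simp

lemma vlist_prod:
  assumes j: "1 \<le> j" "j \<le> n"
  shows "int (a j) * prod_list (vlist n a j) = (\<Prod>i=1..n. int (a i))"
proof -
  have "prod_list (vlist n a j) = (\<Prod>k\<in>{1..<n}. int (a (idx n j k)))"
    unfolding vlist_idx using prod.distinct_set_conv_list[of "[1..<n]" "\<lambda>k. int (a (idx n j k))"] by simp
  also have "\<dots> = (\<Prod>i\<in>{1..n} - {j}. int (a i))"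
    using idx_bij[OF j] .
  moreover have "(\<Prod>i=1..n. int (a i)) = int (a j) * (\<Prod>i\<in>{1..n} - {j}. int (a i))"
    using prod.remove[of "{1..n}" j "\<lambda>i. int (a i)"] j by simp
  ultimately show ?thesis by simp
qed

lemma vlist_split:
  fixes a :: "nat \<Rightarrow> nat"
  assumes n: "n \<ge> 2" and j: "1 \<le> j" "j \<le> n"
  defines "L \<equiv> map (\<lambda>k. int (a (idx n j (Suc k)))) [1..<n-1]"
  shows "vlist n a j = int (a (if j = 1 then n else j - 1)) # L"
    and "vlist n a (if j = 1 then n else j - 1) = L @ [int (a j)]"
proof -
  have u1: "[1..<n] = 1 # map Suc [1..<n-1]"
    using n by (simp add: upt_conv_Cons map_Suc_upt)
  have h: "idx n j 1 = (if j = 1 then n else j - 1)"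
    using n j by (simp add: idx_eq)
  show "vlist n a j = int (a (if j = 1 then n else j - 1)) # L"
    unfolding vlist_idx L_def u1 using h by simp
  have u2: "[1..<n] = [1..<n-1] @ [n-1]"
  proof -
    obtain m where m: "n = Suc m" using n by (cases n) auto
    then show ?thesis using n by (simp add: upt_Suc)
  qed
  have e: "idx n (if j = 1 then n else j - 1) k = idx n j (Suc k)" if k: "1 \<le> k" "k < n - 1" for k
    using k j n by (auto simp: idx_eq)
  have e2: "idx n (if j = 1 then n else j - 1) (n - 1) = j"
    using j n by (auto simp: idx_eq)
  show "vlist n a (if j = 1 then n else j - 1) = L @ [int (a j)]"
    unfolding vlist_idx L_def u2 using e e2 by simp
qed

lemma recur:
  assumes n: "n \<ge> 1" and j: "1 \<le> j" "j \<le> n"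
  shows "int (a j) * rho (vlist n a j) + rho (vlist n a (if j = 1 then n else j - 1))
       = (\<Prod>i=1..n. int (a i)) - (-1) ^ n"
proof (cases "n = 1")
  case True
  then show ?thesis using j by (simp add: vlist_def)
next
  case False
  then have n2: "n \<ge> 2" using n by simp
  define L where "L = map (\<lambda>k. int (a (idx n j (Suc k)))) [1..<n-1]"
  note s = vlist_split[OF n2 j, of a, folded L_def]
  have lenL: "length L = n - 2" by (simp add: L_def)
  have P: "int (a j) * prod_list (vlist n a j) = (\<Prod>i=1..n. int (a i))" using vlist_prod j by blast
  have ev: "(-1::int) ^ (n - 2) = (-1) ^ n"
  proof -
    have nn: "n = (n - 2) + 2" using n2 by simp
    have "(-1::int) ^ n = (-1) ^ (n - 2) * (-1)^2" by (subst nn) (rule power_add)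
    then show ?thesis by simp
  qed
  have P2: "int (a j) * (int (a (if j = 1 then n else j - 1)) * prod_list L) = (\<Prod>i=1..n. int (a i))"
    using P unfolding s by simp
  have "int (a j) * rho (vlist n a j) + rho (vlist n a (if j = 1 then n else j - 1))
      = int (a j) * (int (a (if j = 1 then n else j - 1)) * prod_list L) - (-1) ^ (n-2)"
    unfolding s by (simp add: rho_Cons rho_snoc lenL algebra_simps)
  then show ?thesis using P2 ev by simp
qed



lemma idx_range: "0 < n \<Longrightarrow> idx n j k \<in> {1..n}"
  by (simp add: idx_def Suc_leI)

lemma vlist_ge1:
  assumes apos: "\<forall>j\<in>{1..n}. a j \<ge> 1"
  shows "\<forall>x\<in>set (vlist n a j). x \<ge> 1"
proof (cases "n = 0")
  case False
  then show ?thesis using apos idx_range[of n j] unfolding vlist_idx by fastforce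
qed (simp add: vlist_def)

lemma v_pos:
  assumes n: "n \<ge> 1" and j: "1 \<le> j" "j \<le> n" and apos: "\<forall>j\<in>{1..n}. a j \<ge> 1"
    and par: "even n \<Longrightarrow> \<not> (\<forall>j\<in>{1..n}. even j \<longrightarrow> a j = 1) \<and> \<not> (\<forall>j\<in>{1..n}. odd j \<longrightarrow> a j = 1)"
  shows "rho (vlist n a j) \<ge> 1"
proof (cases "even n")
  case False
  then show ?thesis using rho_pos_even[OF vlist_ge1[OF apos]] n by (simp add: vlist_def)
next
  case True
  have nn: "rho (vlist n a j) \<ge> 0 \<and> (rho (vlist n a j) = 0 \<longrightarrow>
      (\<forall>i<length (vlist n a j). even i \<longrightarrow> vlist n a j ! i = 1))"
    using rho_nonneg[OF vlist_ge1[OF apos]] by blast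
  show ?thesis
  proof (rule ccontr)
    assume "\<not> ?thesis"
    then have z: "\<forall>i<n - 1. even i \<longrightarrow> a (idx n j (Suc i)) = 1"
      using nn by (auto simp: vlist_idx)
    have all: "a m = 1" if m: "m \<in> {1..n}" "odd m \<noteq> odd j" for m
    proof -
      define k where "k = (if m < j then j - m else j + n - m)"
      have mj: "m \<noteq> j" using m by auto
      have k1: "1 \<le> k" "k < n" using m j mj by (auto simp: k_def)
      have ko: "odd k"
      proof (cases "m < j")
        case True
        then show ?thesis using m(2) by (auto simp: k_def)
      next
        case False
        then have "j + n - m = (j + n) - m" by simp
        then show ?thesis using m False True mj by (auto simp: k_def)
      qed
      have "idx n j k = m" using k1 m j mj by (auto simp: idx_eq k_def)
      moreover obtain i where i: "k = Suc i" using k1 by (cases k) auto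
      moreover have "even i" "i < n - 1" using ko k1 i by auto
      ultimately show ?thesis using z by auto
    qed
    show False
    proof (cases "odd j")
      case True
      then have "\<forall>m\<in>{1..n}. even m \<longrightarrow> a m = 1" using all by auto
      then show False using par \<open>even n\<close> by blast
    next
      case False
      then have "\<forall>m\<in>{1..n}. odd m \<longrightarrow> a m = 1" using all by auto
      then show False using par \<open>even n\<close> by blast
    qed
  qed
qed



lemma cyc_zero:
  fixes u :: "nat \<Rightarrow> rat" and a :: "nat \<Rightarrow> nat"
  assumes n: "n \<ge> 1" and apos: "\<forall>j\<in>{1..n}. a j \<ge> 1"
    and eq: "\<forall>j\<in>{1..n}. of_nat (a j) * u j + u (if j = 1 then n else j - 1) = 0"
    and dne: "(\<Prod>j=1..n. int (a j)) \<noteq> (-1) ^ n"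
  shows "\<forall>j\<in>{1..n}. u j = 0"
proof -
  have ch: "u 1 = (-1)^k * (\<Prod>i=2..k+1. of_nat (a i)) * u (k+1)" if "k < n" for k
    using that
  proof (induction k)
    case 0 then show ?case by simp
  next
    case (Suc k)
    have "of_nat (a (k+2)) * u (k+2) + u (k+1) = 0" using eq Suc.prems by (auto dest: bspec[of _ _ "k+2"])
    then have "u (k+1) = - of_nat (a (k+2)) * u (k+2)" by (simp add: algebra_simps eq_neg_iff_add_eq_0)
    moreover have "(\<Prod>i=2..Suc k+1. of_nat (a i)) = (\<Prod>i=2..k+1. of_nat (a i)) * (of_nat (a (k+2)) :: rat)"
      by (simp add: prod.cl_ivl_Suc)
    ultimately show ?case using Suc by simp
  qed
  have pnz: "(\<Prod>i=2..k+1. of_nat (a i)) \<noteq> (0::rat)" if "k < n" for k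
  proof -
    have "\<forall>i\<in>{2..k+1}. a i \<ge> 1" using apos that by auto
    then show ?thesis by (auto simp: prod_zero_iff Suc_le_eq)
  qed
  have l: "u 1 = (-1)^(n-1) * (\<Prod>i=2..n. of_nat (a i)) * u n" using ch[of "n-1"] n by simp
  have "of_nat (a 1) * u 1 + u n = 0" using bspec[OF eq, of 1] n by simp
  then have un: "u n = - of_nat (a 1) * u 1" by (simp add: algebra_simps eq_neg_iff_add_eq_0)
  have pr: "(\<Prod>i=1..n. of_nat (a i)) = of_nat (a 1) * (\<Prod>i=2..n. of_nat (a i) :: rat)"
    using n by (simp add: prod.atLeast_Suc_atMost numeral_2_eq_2)
  have "u 1 = (-1)^(n-1) * (- 1) * (\<Prod>i=1..n. of_nat (a i)) * u 1" using l un pr by (simp add: algebra_simps)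
  also have "(-1::rat)^(n-1) * (- 1) = (-1)^n" using n by (cases n) auto
  finally have u1e: "u 1 = (-1)^n * (\<Prod>i=1..n. of_nat (a i)) * u 1" .
  have u1: "u 1 = 0"
  proof (rule ccontr)
    assume "u 1 \<noteq> 0"
    then have "(-1)^n * (\<Prod>i=1..n. of_nat (a i)) = (1::rat)" using u1e by simp
    then have "(-1)^n * ((-1)^n * (\<Prod>i=1..n. of_nat (a i))) = ((-1)^n::rat)" by simp
    then have "(\<Prod>i=1..n. of_nat (a i)) = ((-1)^n::rat)" by (simp flip: mult.assoc power_mult_distrib)
    then have "of_int (\<Prod>i=1..n. int (a i)) = (of_int ((-1)^n)::rat)" by simp
    then show False using dne by (simp only: of_int_eq_iff)
  qed
  show ?thesis
  proof
    fix j assume j: "j \<in> {1..n}"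
    then obtain k where k: "j = k + 1" "k < n" by (cases j) auto
    show "u j = 0" using ch[OF k(2)] pnz[OF k(2)] u1 k by simp
  qed
qed

lemma prod_prev:
  assumes n: "(n::nat) \<ge> 1"
  shows "(\<Prod>j=1..n. f (if j = 1 then n else j - 1)) = (\<Prod>j=1..n. (f j :: 'a::comm_monoid_mult))"
  apply (rule prod.reindex_bij_witness[where i="\<lambda>j::nat. if j = n then 1 else j + 1"
          and j="\<lambda>j. if j = 1 then n else j - 1"])
  using n by auto

lemma gcd_chain:
  fixes v :: "nat \<Rightarrow> int"
  assumes n: "n \<ge> 1"
    and rec: "\<forall>j\<in>{1..n}. int (a j) * v j + v (if j = 1 then n else j - 1) = d"
    and dpos: "d > 0"
  shows "\<forall>j\<in>{1..n}. gcd (v j) d = gcd (v 1) d"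
proof -
  have st: "gcd (v j) d dvd gcd (v (if j = 1 then n else j - 1)) d" if j: "j \<in> {1..n}" for j
  proof -
    have "v (if j = 1 then n else j - 1) = d - int (a j) * v j" using rec j by (auto simp: algebra_simps)
    then show ?thesis by simp
  qed
  have dn: "\<forall>i. 1 \<le> i \<longrightarrow> i \<le> j \<longrightarrow> j \<le> n \<longrightarrow> gcd (v j) d dvd gcd (v i) d" for j
  proof (induction j)
    case (Suc j)
    show ?case
    proof (intro allI impI)
      fix i assume i: "1 \<le> i" "i \<le> Suc j" "Suc j \<le> n"
      show "gcd (v (Suc j)) d dvd gcd (v i) d"
      proof (cases "i = Suc j")
        case False
        then have "i \<le> j" "j \<ge> 1" using i by auto
        then have "gcd (v j) d dvd gcd (v i) d" using Suc.IH i by auto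
        moreover have "gcd (v (Suc j)) d dvd gcd (v j) d" using st[of "Suc j"] i \<open>j \<ge> 1\<close> by auto
        ultimately show ?thesis using dvd_trans by blast
      qed simp
    qed
  qed simp
  have g1n: "gcd (v 1) d dvd gcd (v n) d" using st[of 1] n by simp
  show ?thesis
  proof
    fix j assume j: "j \<in> {1..n}"
    have "gcd (v j) d dvd gcd (v 1) d" using dn[of j] j by auto
    moreover have "gcd (v n) d dvd gcd (v j) d" using dn[of n] j by auto
    ultimately show "gcd (v j) d = gcd (v 1) d" using g1n
      by (meson dvd_trans gcd_ge_0_int zdvd_antisym_nonneg)
  qed
qed

lemma quot:
  assumes "d > 0"
  shows "quotient_of (of_int v / of_int d :: rat) = (v div gcd v d, d div gcd v d)"
  using assms by (simp add: Fract_of_int_quotient[symmetric] quotient_of_Fract normalize_def Let_def)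



definition zt :: "nat \<Rightarrow> nat \<Rightarrow> complex" where
  "zt m a = exp (2 * of_real pi * \<i> * of_nat a / of_nat m)"

lemma Lambda_zt: "Lambda m z = (\<Sum>a<m. if z = zt m a then 1 else 0)"
  by (simp add: Lambda_def gr_basis_def zt_def)

lemma zt_nz: "zt m a \<noteq> 0" by (simp add: zt_def)

lemma zt_1: "zt 1 0 = 1" by (simp add: zt_def)

lemma Lambda_1: "Lambda 1 z = (if z = 1 then 1 else 0)"
  by (simp add: Lambda_zt zt_def)

lemma zt_mult:
  assumes m: "m > 0"
  shows "zt m a * zt m b = zt m ((a + b) mod m)"
proof -
  define c where "c = 2 * of_real pi * \<i>"
  have s: "a + b = (a + b) mod m + m * ((a + b) div m)" by simp
  have "zt m a * zt m b = exp (c * of_nat (a + b) / of_nat m)"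
    by (simp add: zt_def c_def exp_add[symmetric] add_divide_distrib distrib_left)
  also have "c * of_nat (a + b) / of_nat m = c * of_nat ((a + b) mod m) / of_nat m + of_nat ((a + b) div m) * c"
  proof -
    have s': "(of_nat (a+b)::complex) = of_nat ((a+b) mod m) + of_nat m * of_nat ((a+b) div m)"
      using s by (metis of_nat_add of_nat_mult)
    show ?thesis using m unfolding s' by (simp add: field_simps)
  qed
  also have "exp \<dots> = zt m ((a + b) mod m) * exp c ^ ((a + b) div m)"
    by (simp add: exp_add exp_of_nat_mult zt_def c_def)
  also have "exp c = 1" by (simp add: c_def)
  finally show ?thesis by simp
qed

lemma gr_mult_eq:
  assumes A: "finite A" "0 \<notin> A" and supp: "\<And>x. f x \<noteq> 0 \<Longrightarrow> x \<in> A"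
  shows "gr_mult f g z = (\<Sum>x\<in>A. f x * g (z / x))"
proof -
  define B where "B = {x\<in>A. f x \<noteq> 0 \<and> g (z / x) \<noteq> 0}"
  have S: "{(x, y). f x \<noteq> 0 \<and> g y \<noteq> 0 \<and> x * y = z} = (\<lambda>x. (x, z / x)) ` B"
  proof (intro set_eqI iffI)
    fix p assume "p \<in> {(x, y). f x \<noteq> 0 \<and> g y \<noteq> 0 \<and> x * y = z}"
    then obtain x y where p: "p = (x, y)" "f x \<noteq> 0" "g y \<noteq> 0" "x * y = z" by auto
    have "x \<in> A" using supp p by auto
    then have "x \<noteq> 0" using A by auto
    then have "y = z / x" using p by (auto simp: field_simps)
    then show "p \<in> (\<lambda>x. (x, z / x)) ` B" using p \<open>x \<in> A\<close> by (auto simp: B_def)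
  next
    fix p assume "p \<in> (\<lambda>x. (x, z / x)) ` B"
    then obtain x where p: "p = (x, z / x)" "x \<in> B" by auto
    then have "x \<noteq> 0" using A by (auto simp: B_def)
    then show "p \<in> {(x, y). f x \<noteq> 0 \<and> g y \<noteq> 0 \<and> x * y = z}" using p by (auto simp: B_def)
  qed
  have "gr_mult f g z = (\<Sum>x\<in>B. f x * g (z / x))"
    unfolding gr_mult_def S by (subst sum.reindex) (auto simp: inj_on_def)
  also have "\<dots> = (\<Sum>x\<in>A. f x * g (z / x))"
    by (rule sum.mono_neutral_left) (auto simp: B_def A)
  finally show ?thesis .
qed

lemma sum_Lambda:
  assumes "finite A" "\<And>a. a < m \<Longrightarrow> zt m a \<in> A"
  shows "(\<Sum>y\<in>A. Lambda m y * h y) = (\<Sum>a<m. h (zt m a))"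
proof -
  have "(\<Sum>y\<in>A. Lambda m y * h y) = (\<Sum>y\<in>A. \<Sum>a<m. if y = zt m a then h y else 0)"
    unfolding Lambda_zt sum_distrib_right by (intro sum.cong refl) auto
  also have "\<dots> = (\<Sum>a<m. \<Sum>y\<in>A. if y = zt m a then h y else 0)"
    by (rule sum.swap)
  also have "\<dots> = (\<Sum>a<m. h (zt m a))"
    using assms by (intro sum.cong refl) (simp add: sum.delta')
  finally show ?thesis .
qed



lemma zt_1'[simp]: "zt (Suc 0) 0 = 1" using zt_1 by simp

lemma Lambda_1': "Lambda (Suc 0) z = (if z = 1 then 1 else 0)" using Lambda_1 by simp

lemma shift_sum:
  assumes m: "m > (0::nat)"
  shows "(\<Sum>b<m. h ((a + b) mod m)) = (\<Sum>b<m. (h b :: 'a::comm_monoid_add))"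
proof -
  have inj: "inj_on (\<lambda>b. (a + b) mod m) {..<m}"
  proof
    fix x y assume xy: "x \<in> {..<m}" "y \<in> {..<m}" "(a + x) mod m = (a + y) mod m"
    then have "int ((a + x) mod m) = int ((a + y) mod m)" by simp
    then have "(int a + int x) mod int m = (int a + int y) mod int m" by (simp add: zmod_int)
    then have "int x mod int m = int y mod int m" by (metis mod_add_left_eq add_diff_cancel_left' mod_diff_left_eq)
    then show "x = y" using xy by (simp add: zmod_int)
  qed
  have img: "(\<lambda>b. (a + b) mod m) ` {..<m} = {..<m}"
    by (rule endo_inj_surj) (use inj m in auto)
  show ?thesis
    using sum.reindex[OF inj, of h] img by simp
qed

lemma conv_tt:
  assumes m: "m > 0"
  shows "(\<Sum>a<m. Lambda m (z / zt m a)) = of_nat m * Lambda m z"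
proof -
  have "Lambda m (z / zt m a) = Lambda m z" if "a < m" for a
  proof -
    have "Lambda m (z / zt m a) = (\<Sum>b<m. if z = zt m ((a + b) mod m) then 1 else 0)"
      unfolding Lambda_zt using zt_nz[of m a]
      by (intro sum.cong refl) (auto simp: divide_eq_eq zt_mult[OF m, symmetric] mult.commute)
    also have "\<dots> = Lambda m z" unfolding Lambda_zt by (rule shift_sum[OF m])
    finally show ?thesis .
  qed
  then show ?thesis by simp
qed

lemma conv_t1:
  shows "(\<Sum>a<m. Lambda 1 (z / zt m a)) = Lambda m z"
  unfolding Lambda_1 Lambda_zt using zt_nz[of m]
  by (intro sum.cong refl) (auto simp: divide_eq_eq)

lemma conv_t1': "(\<Sum>a<m. Lambda (Suc 0) (z / zt m a)) = Lambda m z"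
  using conv_t1 by simp

definition lin :: "rat \<Rightarrow> rat \<Rightarrow> nat \<Rightarrow> qgr" where
  "lin c e t = gr_add (gr_smult c (Lambda t)) (gr_smult e (Lambda 1))"

lemma Lambda_supp: "Lambda m y \<noteq> 0 \<Longrightarrow> y \<in> zt m ` {..<m}"
proof (rule ccontr)
  assume "Lambda m y \<noteq> 0" "y \<notin> zt m ` {..<m}"
  then show False unfolding Lambda_zt by (auto intro!: sum.neutral)
qed

lemma main_mult:
  assumes t: "t > 0"
  shows "gr_mult (lin c e t) (gr_diff (gr_smult x (Lambda t)) (Lambda 1)) = lin (c * x * of_nat t - c + e * x) (- e) t"
proof
  fix z
  define A where "A = zt t ` {..<t} \<union> {1}"
  have A: "finite A" "0 \<notin> A" using zt_nz by (auto simp: A_def)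
  have supp: "lin c e t y \<noteq> 0 \<Longrightarrow> y \<in> A" for y
    using Lambda_supp[of t y] unfolding lin_def gr_add_def gr_smult_def A_def Lambda_1
    by (auto split: if_splits)
  have inA: "zt t a \<in> A" if "a < t" for a using that by (auto simp: A_def)
  have inA1: "zt (Suc 0) a \<in> A" if "a < Suc 0" for a using that by (auto simp: A_def)
  have "gr_mult (lin c e t) (gr_diff (gr_smult x (Lambda t)) (Lambda 1)) z
      = (\<Sum>y\<in>A. lin c e t y * (x * Lambda t (z / y) - Lambda 1 (z / y)))"
    by (subst gr_mult_eq[OF A supp]) (auto simp: gr_diff_def gr_smult_def)
  also have "\<dots> = c * x * (\<Sum>y\<in>A. Lambda t y * Lambda t (z / y))
      - c * (\<Sum>y\<in>A. Lambda t y * Lambda 1 (z / y))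
      + e * x * (\<Sum>y\<in>A. Lambda 1 y * Lambda t (z / y))
      - e * (\<Sum>y\<in>A. Lambda 1 y * Lambda 1 (z / y))"
    by (simp add: lin_def gr_add_def gr_smult_def sum_distrib_left sum.distrib sum_subtractf
        algebra_simps)
  also have "\<dots> = c * x * (of_nat t * Lambda t z) - c * Lambda t z + e * x * Lambda t z - e * Lambda 1 z"
    by (simp add: sum_Lambda[OF A(1) inA] sum_Lambda[OF A(1) inA1] conv_tt[OF t] conv_t1')
  also have "\<dots> = lin (c * x * of_nat t - c + e * x) (- e) t z"
    by (simp add: lin_def gr_add_def gr_smult_def algebra_simps)
  finally show "gr_mult (lin c e t) (gr_diff (gr_smult x (Lambda t)) (Lambda 1)) z = lin (c * x * of_nat t - c + e * x) (- e) t z" .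
qed



theorem lemma4p1:
  fixes n :: nat and a :: "nat \<Rightarrow> nat"
  defines "d \<equiv> (\<Prod>j=1..n. int (a j)) - (-1) ^ n"
      and "v \<equiv> \<lambda>j. rho (vlist n a j)"
  defines "w \<equiv> \<lambda>j. (of_int (v j) / of_int d :: rat)"
      and "\<gamma> \<equiv> gcd (v 1) d"
  assumes apos: "\<forall>j\<in>{1..n}. a j \<ge> 1"
      and dpos: "d > 0"
      and par: "even n \<Longrightarrow> \<not> (\<forall>j\<in>{1..n}. even j \<longrightarrow> a j = 1) \<and> \<not> (\<forall>j\<in>{1..n}. odd j \<longrightarrow> a j = 1)"
  shows "(\<forall>j\<in>{1..n}. of_nat (a j) * w j + w (if j = 1 then n else j - 1) = 1)
    \<and> (\<forall>w' :: nat \<Rightarrow> rat. (\<forall>j\<in>{1..n}. of_nat (a j) * w' j + w' (if j = 1 then n else j - 1) = 1)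
          \<longrightarrow> (\<forall>j\<in>{1..n}. w' j = w j))
    \<and> (\<forall>j\<in>{1..n}. 0 < w j \<and> w j < 1)
    \<and> (\<forall>j\<in>{1..n}. quotient_of (w j) = (v j div \<gamma>, d div \<gamma>))
    \<and> (\<forall>j\<in>{1..n}. gcd (v j) d = \<gamma>)
    \<and> (\<Prod>j=1..n. 1 / w j - 1) = of_nat (\<Prod>j=1..n. a j)
    \<and> Dw n w = gr_add (gr_smult (of_int \<gamma>) (Lambda (nat (d div \<gamma>)))) (gr_smult ((-1) ^ n) (Lambda 1))"
proof -
  have n1: "n \<ge> 1"
  proof (rule ccontr)
    assume "\<not> n \<ge> 1" then have "n = 0" by simp
    then show False using dpos by (simp add: d_def)
  qed
  have pr_in: "(if j = 1 then n else j - 1) \<in> {1..n}" if "j \<in> {1..n}" for j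
    using that n1 by auto
  have rec: "\<forall>j\<in>{1..n}. int (a j) * v j + v (if j = 1 then n else j - 1) = d"
    using recur[OF n1] by (simp add: v_def d_def)
  have vpos: "\<forall>j\<in>{1..n}. v j \<ge> 1"
    using v_pos[OF n1 _ _ apos par] by (simp add: v_def)
  have vlt: "\<forall>j\<in>{1..n}. v j < d"
  proof
    fix j assume j: "j \<in> {1..n}"
    have h1: "v j \<ge> 1" "int (a j) \<ge> 1" using vpos j apos by auto
    have "v j \<le> int (a j) * v j" using mult_right_mono[of 1 "int (a j)" "v j"] h1 by simp
    moreover have "v (if j = 1 then n else j - 1) \<ge> 1" using vpos pr_in[OF j] by blast
    ultimately show "v j < d" using rec j by fastforce
  qed
  have dne: "rat_of_int d \<noteq> 0" using dpos by simp
  have sys: "\<forall>j\<in>{1..n}. of_nat (a j) * w j + w (if j = 1 then n else j - 1) = 1"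
  proof
    fix j assume j: "j \<in> {1..n}"
    have "of_int (int (a j) * v j + v (if j = 1 then n else j - 1)) = rat_of_int d" using rec j by simp
    then show "of_nat (a j) * w j + w (if j = 1 then n else j - 1) = 1"
      using dne by (simp add: w_def field_simps)
  qed
  have uniq: "\<forall>w' :: nat \<Rightarrow> rat. (\<forall>j\<in>{1..n}. of_nat (a j) * w' j + w' (if j = 1 then n else j - 1) = 1)
          \<longrightarrow> (\<forall>j\<in>{1..n}. w' j = w j)"
  proof (intro allI impI)
    fix w' :: "nat \<Rightarrow> rat"
    assume h: "\<forall>j\<in>{1..n}. of_nat (a j) * w' j + w' (if j = 1 then n else j - 1) = 1"
    have "\<forall>j\<in>{1..n}. of_nat (a j) * (w' j - w j) + (w' (if j = 1 then n else j - 1) - w (if j = 1 then n else j - 1)) = 0"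
    proof
      fix j assume j: "j \<in> {1..n}"
      show "of_nat (a j) * (w' j - w j) + (w' (if j = 1 then n else j - 1) - w (if j = 1 then n else j - 1)) = 0"
        using bspec[OF h j] bspec[OF sys j] by (simp add: algebra_simps)
    qed
    moreover have "(\<Prod>j=1..n. int (a j)) \<noteq> (-1) ^ n" using dpos by (simp add: d_def)
    ultimately have "\<forall>j\<in>{1..n}. w' j - w j = 0"
      using cyc_zero[OF n1 apos, of "\<lambda>j. w' j - w j"] by blast
    then show "\<forall>j\<in>{1..n}. w' j = w j" by simp
  qed
  have bnd: "\<forall>j\<in>{1..n}. 0 < w j \<and> w j < 1"
  proof
    fix j assume j: "j \<in> {1..n}"
    have "v j \<ge> 1" "v j < d" using vpos vlt j by auto
    then have "rat_of_int (v j) > 0" "rat_of_int (v j) < rat_of_int d" by simp_all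
    then show "0 < w j \<and> w j < 1" using dpos by (simp add: w_def)
  qed
  have gcds: "\<forall>j\<in>{1..n}. gcd (v j) d = \<gamma>"
    unfolding \<gamma>_def by (rule gcd_chain[OF n1 rec dpos])
  have quots: "\<forall>j\<in>{1..n}. quotient_of (w j) = (v j div \<gamma>, d div \<gamma>)"
  proof
    fix j assume j: "j \<in> {1..n}"
    have "quotient_of (w j) = (v j div gcd (v j) d, d div gcd (v j) d)"
      unfolding w_def by (rule quot[OF dpos])
    then show "quotient_of (w j) = (v j div \<gamma>, d div \<gamma>)" using bspec[OF gcds j] by (simp only:)
  qed
  have wnz: "w j \<noteq> 0" if "j \<in> {1..n}" for j using bspec[OF bnd that] by simp
  have prodw: "(\<Prod>j=1..n. 1 / w j - 1) = of_nat (\<Prod>j=1..n. a j)"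
  proof -
    have e: "1 / w (if j = 1 then n else j - 1) - 1 = of_nat (a j) * w j / w (if j = 1 then n else j - 1)"
      if j: "j \<in> {1..n}" for j
    proof -
      have "w (if j = 1 then n else j - 1) = 1 - of_nat (a j) * w j" using bspec[OF sys j] by simp
      then show ?thesis using wnz[OF pr_in[OF j]] by (simp add: field_simps)
    qed
    have "(\<Prod>j=1..n. 1 / w j - 1) = (\<Prod>j=1..n. 1 / w (if j = 1 then n else j - 1) - 1)"
      using prod_prev[OF n1, of "\<lambda>j. 1 / w j - 1"] by simp
    also have "\<dots> = (\<Prod>j=1..n. of_nat (a j) * w j / w (if j = 1 then n else j - 1))"
      using e by (intro prod.cong) auto
    also have "\<dots> = (\<Prod>j=1..n. of_nat (a j)) * (\<Prod>j=1..n. w j) / (\<Prod>j=1..n. w (if j = 1 then n else j - 1))"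
      by (simp add: prod.distrib prod_dividef)
    also have "(\<Prod>j=1..n. w (if j = 1 then n else j - 1)) = (\<Prod>j=1..n. w j)"
      using prod_prev[OF n1, of w] .
    also have "(\<Prod>j=1..n. w j) \<noteq> 0" using wnz by (simp add: prod_zero_iff)
    then have "(\<Prod>j=1..n. of_nat (a j)) * (\<Prod>j=1..n. w j) / (\<Prod>j=1..n. w j) = (\<Prod>j=1..n. (of_nat (a j) :: rat))"
      by simp
    finally show ?thesis by simp
  qed
  have gpos: "\<gamma> > 0" using dpos by (simp add: \<gamma>_def)
  have gd: "\<gamma> dvd d" by (simp add: \<gamma>_def)
  have Dpos: "d div \<gamma> > 0"
    using gpos dpos gd by (simp add: pos_imp_zdiv_pos_iff zdvd_imp_le)
  define T where "T = nat (d div \<gamma>)"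
  have T0: "T > 0" using Dpos by (simp add: T_def)
  have Tq: "(of_nat T :: rat) = of_int (d div \<gamma>)" using Dpos by (simp add: T_def)
  define F where "F = (\<lambda>j. case quotient_of (w j) of (s, t) \<Rightarrow>
      gr_diff (gr_smult (1 / of_int s) (Lambda (nat t))) (Lambda 1))"
  have Fj: "F j = gr_diff (gr_smult (1 / of_int (v j div \<gamma>)) (Lambda T)) (Lambda 1)" if "j \<in> {1..n}" for j
    using quots that by (simp add: F_def T_def)
  have wq: "w j = of_int (v j div \<gamma>) / of_nat T" if "j \<in> {1..n}" for j
    using quotient_of_div[of "w j"] quots that Tq by simp
  define C where "C = (\<lambda>k. ((\<Prod>j=1..k. 1 / w j - 1) - (-1)^k) / (of_nat T :: rat))"
  have ind: "k \<le> n \<Longrightarrow> gr_prod F k = lin (C k) ((-1)^k) T" for k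
  proof (induction k)
    case 0
    show ?case
      by (auto simp: lin_def C_def gr_one_def gr_add_def gr_smult_def Lambda_1' gr_basis_def)
  next
    case (Suc k)
    have j: "Suc k \<in> {1..n}" using Suc.prems by simp
    define x where "x = 1 / rat_of_int (v (Suc k) div \<gamma>)"
    have sne: "rat_of_int (v (Suc k) div \<gamma>) \<noteq> 0" using wq[OF j] wnz[OF j] by auto
    have wx: "1 / w (Suc k) - 1 = of_nat T * x - 1" using wq[OF j] by (simp add: x_def)
    have "gr_prod F (Suc k) = gr_mult (lin (C k) ((-1)^k) T) (gr_diff (gr_smult x (Lambda T)) (Lambda 1))"
      using Suc Fj[OF j] by (simp add: x_def)
    also have "\<dots> = lin (C k * x * of_nat T - C k + (-1)^k * x) (- ((-1)^k)) T"
      by (rule main_mult[OF T0])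
    also have "C k * x * of_nat T - C k + (-1)^k * x = C (Suc k)"
      using T0 unfolding C_def by (simp add: prod.nat_ivl_Suc' wx field_simps)
    finally show ?case by simp
  qed
  have Cn: "C n = of_int \<gamma>"
  proof -
    have "rat_of_int d = of_nat (\<Prod>j=1..n. a j) - (-1)^n" by (simp add: d_def of_nat_prod)
    have pw: "(\<Prod>j=1..n. 1 / w j - 1) = (\<Prod>j=1..n. (of_nat (a j) :: rat))" using prodw by simp
    have "C n = of_int d / of_int (d div \<gamma>)" unfolding C_def pw Tq \<open>rat_of_int d = _\<close> by (simp add: of_nat_prod)
    also have "\<dots> = of_int \<gamma>" using gd Dpos by (auto simp: field_simps elim!: dvdE)
    finally show ?thesis .
  qed
  have Dw_eq: "Dw n w = gr_add (gr_smult (of_int \<gamma>) (Lambda (nat (d div \<gamma>)))) (gr_smult ((-1) ^ n) (Lambda 1))"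
    unfolding Dw_def F_def[symmetric] ind[OF order_refl] Cn by (simp add: lin_def T_def)
  show ?thesis
    apply (intro conjI)
          apply (fact sys)
         apply (fact uniq)
        apply (fact bnd)
       apply (fact quots)
      apply (fact gcds)
     apply (fact prodw)
    apply (fact Dw_eq)
    done
qed



end
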